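(* Fix $\alpha\in(0,\tfrac12)$ and run Algorithm 2 (described in the context) with parameter $\alpha$ on any instance of dynamic bin packing. Then at every time $t$, the algorithm has at most $\frac{1}{\alpha}\mathrm{OPT}_t+O(\log\rho)$ bins open, where $\rho$ is the maximum number of items simultaneously present in the system and the $O(\cdot)$ hides an absolute constant.
   Context: Dynamic bin packing: bins have capacity $1$; items arrive online at times $a_i\ge0$ with size $s_i\in[0,1]$ and (unknown at arrival) duration $d_i>0$, and depart at $a_i+d_i$. The load of a bin is the total size of its items; a bin is open while nonempty. $\mathrm{OPT}_t$ is the minimum number of unit bins needed to pack the items present at time $t$. FirstFit with a given ordering of bins places an item into the first bin in the order with enough remaining capacity, or opens a new bin. Algorithm 1 (parameters $\alpha, f$): each bin is labeled Bad or Good. When an item $i$ of size $s_i$ arrives: if there is a Bad bin with load $\le 1-s_i$, put $i$ there, and if its load becomes $\ge f$ relabel it Good; otherwise, if there is a Good bin with load $\le1-s_i$, put $i$ into any such bin; otherwise open a new bin for $i$, labeled Bad if its load is $<f$ and Good otherwise. When an item departs: if its bin was Good and now has load $<\alpha$, migrate all items remaining in that bin using FirstFit with bins ordered Bad bins, then Good bins, then new bins. Algorithm 2 (parameter $\alpha$): an item has class $c\in\{0,1,2,\dots\}$ if its size lies in $(2^{-(c+1)},2^{-c}]$. Initialize a guess $\tilde\rho=1$, an instance of Algorithm 1 for class $0$ with parameters $(\alpha,\tfrac12)$, and one junk bin. For each arriving item: if the current number of items in the system is $\ge\tilde\rho$, double $\tilde\rho$, initialize a new instance of Algorithm 1 for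 class $c=\log_2\tilde\rho$ with parameters $(\alpha,1-2^{-c})$, and open a new junk bin for this guess. Then, if the item's class $c$ satisfies $c<\log_2\tilde\rho$, assign it using the Algorithm 1 instance for class $c$ (each instance uses its own bins); otherwise assign it to the junk bin of the current guess $\tilde\rho$. *)

theory Defs
  imports Complex_Main
begin

definition valid_instance :: "nat \<Rightarrow> (nat \<Rightarrow> real) \<Rightarrow> (nat \<Rightarrow> real) \<Rightarrow> (nat \<Rightarrow> real) \<Rightarrow> bool" where
  "valid_instance n arr sz dur \<longleftrightarrow>
     (\<forall>i<n. 0 \<le> arr i \<and> 0 \<le> sz i \<and> sz i \<le> 1 \<and> 0 < dur i)"

definition present :: "nat \<Rightarrow> (nat \<Rightarrow> real) \<Rightarrow> (nat \<Rightarrow> real) \<Rightarrow> real \<Rightarrow> nat set" where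
  "present n arr dur t = {i. i < n \<and> arr i \<le> t \<and> t < arr i + dur i}"

definition OPT :: "(nat \<Rightarrow> real) \<Rightarrow> nat set \<Rightarrow> nat" where
  "OPT sz S = (LEAST k. \<exists>asg :: nat \<Rightarrow> nat. (\<forall>i\<in>S. asg i < k) \<and>
                          (\<forall>b<k. (\<Sum>i\<in>{i\<in>S. asg i = b}. sz i) \<le> 1))"

definition rho :: "nat \<Rightarrow> (nat \<Rightarrow> real) \<Rightarrow> (nat \<Rightarrow> real) \<Rightarrow> nat" where
  "rho n arr dur = Max ((\<lambda>t. card (present n arr dur t)) ` UNIV)"

datatype event = Arr nat | Dep nat

fun etime :: "(nat \<Rightarrow> real) \<Rightarrow> (nat \<Rightarrow> real) \<Rightarrow> event \<Rightarrow> real" where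
  "etime arr dur (Arr i) = arr i"
| "etime arr dur (Dep i) = arr i + dur i"

fun is_dep :: "event \<Rightarrow> bool" where
  "is_dep (Arr i) = False"
| "is_dep (Dep i) = True"

text \<open>The order in which the online algorithm processes the events: every arrival and departure
  exactly once, in nondecreasing order of time; at equal times departures are processed before
  arrivals (items are present on the half-open interval [a_i, a_i + d_i)). Ties among events of
  the same kind at the same time are broken arbitrarily.\<close>
definition valid_events :: "nat \<Rightarrow> (nat \<Rightarrow> real) \<Rightarrow> (nat \<Rightarrow> real) \<Rightarrow> event list \<Rightarrow> bool" where
  "valid_events n arr dur es \<longleftrightarrow>
     distinct es \<and> set es = {Arr i | i. i < n} \<union> {Dep i | i. i < n} \<and>
     sorted_wrt (\<lambda>e1 e2. etime arr dur e1 < etime arr dur e2 \<or>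
                          (etime arr dur e1 = etime arr dur e2 \<and> (is_dep e1 \<or> \<not> is_dep e2))) es"

text \<open>Locations of items: the junk bin of guess 2^k, or a bin (with identifier b) of one
  of the Algorithm 1 instances.\<close>
datatype loc = Junk nat | Bin nat

record state =
  pos  :: "nat \<Rightarrow> loc option"   \<comment> \<open>current bin of each item present in the system\<close>
  cls  :: "nat \<Rightarrow> nat"          \<comment> \<open>the class (= Algorithm 1 instance) owning bin b\<close>
  good :: "nat \<Rightarrow> bool"         \<comment> \<open>label of bin b: True = Good, False = Bad\<close>
  gk   :: nat                   \<comment> \<open>current guess is 2 ^ gk\<close>

definition init_state :: state where
  "init_state = \<lparr>pos = (\<lambda>_. None), cls = (\<lambda>_. 0), good = (\<lambda>_. False), gk = 0\<rparr>"

definition load :: "(nat \<Rightarrow> real) \<Rightarrow> (nat \<Rightarrow> loc option) \<Rightarrow> loc \<Rightarrow> real" where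
  "load sz p l = (\<Sum>j\<in>{j. p j = Some l}. sz j)"

definition is_open :: "(nat \<Rightarrow> loc option) \<Rightarrow> nat \<Rightarrow> bool" where
  "is_open p b \<longleftrightarrow> (\<exists>j. p j = Some (Bin b))"

definition num_open :: "state \<Rightarrow> nat" where
  "num_open \<sigma> = card (ran (pos \<sigma>))"

definition num_items :: "state \<Rightarrow> nat" where
  "num_items \<sigma> = card {j. pos \<sigma> j \<noteq> None}"

definition item_class :: "real \<Rightarrow> nat" where
  "item_class x = (THE c. (1/2::real) ^ Suc c < x \<and> x \<le> (1/2) ^ c)"

text \<open>Threshold parameter f of the Algorithm 1 instance for class c.\<close>
definition fpar :: "nat \<Rightarrow> real" where
  "fpar c = (if c = 0 then 1/2 else 1 - (1/2) ^ c)"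

fun first_fit :: "(nat \<Rightarrow> real) \<Rightarrow> nat list \<Rightarrow> nat list \<Rightarrow> (nat \<Rightarrow> real) \<Rightarrow> nat list
                   \<Rightarrow> (nat \<times> nat) list" where
  "first_fit sz ord fr ld [] = []"
| "first_fit sz ord fr ld (x # xs) =
     (case find (\<lambda>b. ld b + sz x \<le> 1) ord of
        Some b \<Rightarrow> (x, b) # first_fit sz ord fr (ld(b := ld b + sz x)) xs
      | None \<Rightarrow> (case fr of
                   [] \<Rightarrow> []
                 | b # fr' \<Rightarrow> (x, b) # first_fit sz (ord @ [b]) fr' (ld(b := sz x)) xs))"

definition migrate_result ::
  "(nat \<Rightarrow> real) \<Rightarrow> real \<Rightarrow> nat \<Rightarrow> nat list \<Rightarrow> (nat \<times> nat) list \<Rightarrow> state \<Rightarrow> state" where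
  "migrate_result sz f c ord A \<sigma> =
     (let p' = (\<lambda>j. case map_of A j of Some b \<Rightarrow> Some (Bin b) | None \<Rightarrow> pos \<sigma> j);
          newb = set (map snd A) - set ord
      in \<sigma>\<lparr>pos := p',
           cls := (\<lambda>b. if b \<in> newb then c else cls \<sigma> b),
           good := (\<lambda>b. if b \<in> newb then f \<le> load sz p' (Bin b)
                        else if b \<in> set ord then good \<sigma> b \<or> f \<le> load sz p' (Bin b)
                        else good \<sigma> b)\<rparr>)"

definition new_guess :: "state \<Rightarrow> nat" where
  "new_guess \<sigma> = (if num_items \<sigma> \<ge> 2 ^ gk \<sigma> then Suc (gk \<sigma>) else gk \<sigma>)"

definition bad_cand :: "(nat \<Rightarrow> real) \<Rightarrow> state \<Rightarrow> nat \<Rightarrow> real \<Rightarrow> nat \<Rightarrow> bool" where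
  "bad_cand sz \<sigma> c x b \<longleftrightarrow> is_open (pos \<sigma>) b \<and> cls \<sigma> b = c \<and> \<not> good \<sigma> b \<and>
                            load sz (pos \<sigma>) (Bin b) \<le> 1 - x"

definition good_cand :: "(nat \<Rightarrow> real) \<Rightarrow> state \<Rightarrow> nat \<Rightarrow> real \<Rightarrow> nat \<Rightarrow> bool" where
  "good_cand sz \<sigma> c x b \<longleftrightarrow> is_open (pos \<sigma>) b \<and> cls \<sigma> b = c \<and> good \<sigma> b \<and>
                             load sz (pos \<sigma>) (Bin b) \<le> 1 - x"

text \<open>All choices left open by
  the algorithm (which Bad/Good bin, bin identifiers, the order of bins within the Bad and
  the Good group and of the migrated items in FirstFit) are nondeterministic.\<close>
inductive step :: "real \<Rightarrow> (nat \<Rightarrow> real) \<Rightarrow> state \<Rightarrow> event \<Rightarrow> state \<Rightarrow> bool" where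
  arr_junk:
  "\<lbrakk> k = new_guess \<sigma>; \<not> (0 < sz i \<and> item_class (sz i) < k) \<rbrakk> \<Longrightarrow>
     step \<alpha> sz \<sigma> (Arr i) (\<sigma>\<lparr>gk := k, pos := (pos \<sigma>)(i := Some (Junk k))\<rparr>)"
| arr_bad:
  "\<lbrakk> k = new_guess \<sigma>; 0 < sz i; c = item_class (sz i); c < k; bad_cand sz \<sigma> c (sz i) b \<rbrakk> \<Longrightarrow>
     step \<alpha> sz \<sigma> (Arr i)
       (\<sigma>\<lparr>gk := k, pos := (pos \<sigma>)(i := Some (Bin b)),
          good := (good \<sigma>)(b := fpar c \<le> load sz (pos \<sigma>) (Bin b) + sz i)\<rparr>)"
| arr_good:
  "\<lbrakk> k = new_guess \<sigma>; 0 < sz i; c = item_class (sz i); c < k;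
     \<forall>b'. \<not> bad_cand sz \<sigma> c (sz i) b'; good_cand sz \<sigma> c (sz i) b \<rbrakk> \<Longrightarrow>
     step \<alpha> sz \<sigma> (Arr i) (\<sigma>\<lparr>gk := k, pos := (pos \<sigma>)(i := Some (Bin b))\<rparr>)"
| arr_new:
  "\<lbrakk> k = new_guess \<sigma>; 0 < sz i; c = item_class (sz i); c < k;
     \<forall>b'. \<not> bad_cand sz \<sigma> c (sz i) b'; \<forall>b'. \<not> good_cand sz \<sigma> c (sz i) b';
     \<not> is_open (pos \<sigma>) b \<rbrakk> \<Longrightarrow>
     step \<alpha> sz \<sigma> (Arr i)
       (\<sigma>\<lparr>gk := k, pos := (pos \<sigma>)(i := Some (Bin b)), cls := (cls \<sigma>)(b := c),
          good := (good \<sigma>)(b := fpar c \<le> sz i)\<rparr>)"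
| dep_plain:
  "\<lbrakk> pos \<sigma> i = Some l; p' = (pos \<sigma>)(i := None);
     \<not> (\<exists>b. l = Bin b \<and> good \<sigma> b \<and> load sz p' l < \<alpha>) \<rbrakk> \<Longrightarrow>
     step \<alpha> sz \<sigma> (Dep i) (\<sigma>\<lparr>pos := p'\<rparr>)"
| dep_migrate:
  "\<lbrakk> pos \<sigma> i = Some (Bin b); p' = (pos \<sigma>)(i := None); good \<sigma> b; load sz p' (Bin b) < \<alpha>;
     c = cls \<sigma> b;
     distinct M; set M = {j. p' j = Some (Bin b)};
     distinct badl; set badl = {b'. is_open p' b' \<and> cls \<sigma> b' = c \<and> \<not> good \<sigma> b'};
     distinct goodl; set goodl = {b'. is_open p' b' \<and> cls \<sigma> b' = c \<and> good \<sigma> b' \<and> b' \<noteq> b};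
     distinct fr; length M \<le> length fr; \<forall>b'\<in>set fr. \<not> is_open p' b' \<and> b' \<noteq> b;
     A = first_fit sz (badl @ goodl) fr (\<lambda>b'. load sz p' (Bin b')) M \<rbrakk> \<Longrightarrow>
     step \<alpha> sz \<sigma> (Dep i) (migrate_result sz (fpar c) c (badl @ goodl) A (\<sigma>\<lparr>pos := p'\<rparr>))"

definition is_run :: "real \<Rightarrow> (nat \<Rightarrow> real) \<Rightarrow> event list \<Rightarrow> state list \<Rightarrow> bool" where
  "is_run \<alpha> sz es ss \<longleftrightarrow> length ss = Suc (length es) \<and> ss ! 0 = init_state \<and>
     (\<forall>p<length es. step \<alpha> sz (ss ! p) (es ! p) (ss ! Suc p))"

definition state_at :: "(nat \<Rightarrow> real) \<Rightarrow> (nat \<Rightarrow> real) \<Rightarrow> event list \<Rightarrow> state list \<Rightarrow> real \<Rightarrow> state" where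
  "state_at arr dur es ss t = ss ! length (filter (\<lambda>e. etime arr dur e \<le> t) es)"

end

theory Submission
  imports Defs
begin

lemma half_pow_strict_mono: "m < n \<Longrightarrow> (1/2::real)^n < (1/2)^m"
  by (simp add: power_strict_decreasing)

lemma item_class_spec:
  assumes "0 < x" "x \<le> (1::real)"
  shows "(1/2::real) ^ Suc (item_class x) < x \<and> x \<le> (1/2) ^ item_class x"
proof -
  obtain m where m: "(1/2::real)^m < x" using real_arch_pow_inv[of x "1/2"] assms by auto
  define c where "c = (LEAST n. (1/2::real)^Suc n < x)"
  have "(1/2::real)^Suc m \<le> (1/2)^m" by (rule power_decreasing) auto
  then have m': "(1/2::real)^Suc m < x" using m by linarith
  have c1: "(1/2::real)^Suc c < x" unfolding c_def by (rule LeastI, rule m')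
  have c2: "x \<le> (1/2)^c"
  proof (cases c)
    case 0 then show ?thesis using assms by simp
  next
    case (Suc d)
    have "\<not> (1/2::real)^Suc d < x" using not_less_Least[of d "\<lambda>n. (1/2::real)^Suc n < x"]
      unfolding c_def[symmetric] using Suc by auto
    then show ?thesis using Suc by simp
  qed
  have ex: "(1/2::real) ^ Suc c < x \<and> x \<le> (1/2) ^ c" using c1 c2 by simp
  have uniq: "d = c" if "(1/2::real) ^ Suc d < x \<and> x \<le> (1/2) ^ d" for d
  proof (rule ccontr)
    assume "d \<noteq> c"
    then consider "d < c" | "c < d" by linarith
    then show False
    proof cases
      case 1
      then have "(1/2::real)^c \<le> (1/2)^Suc d"
        by (simp add: power_decreasing del: power_Suc)
      then show False using that c2 by linarith
    next
      case 2
      then have "(1/2::real)^d \<le> (1/2)^Suc c"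
        by (simp add: power_decreasing del: power_Suc)
      then show False using that c1 by linarith
    qed
  qed
  have "item_class x = c" unfolding item_class_def
    using ex uniq by (rule the_equality)
  then show ?thesis using ex by simp
qed

lemma fpar_ge: "1/2 \<le> fpar c"
proof (cases c)
  case 0 then show ?thesis by (simp add: fpar_def)
next
  case (Suc d)
  have "(1/2::real)^Suc d \<le> 1/2" by (simp add: power_le_one)
  then show ?thesis using Suc by (simp add: fpar_def)
qed

lemma fpar_class:
  assumes "(1/2::real) ^ Suc c < x" "x \<le> (1/2) ^ c"
  shows "(c = 0 \<and> fpar c \<le> x) \<or> (c \<noteq> 0 \<and> x \<le> 1 - fpar c)"
  using assms by (auto simp: fpar_def)

lemma load_nonopen: "\<not> is_open p b \<Longrightarrow> load sz p (Bin b) = 0"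
  unfolding load_def is_open_def by simp

lemma load_add:
  assumes "p i = None" "finite {j. p j \<noteq> None}"
  shows "load sz (p(i := Some l)) l' = load sz p l' + (if l' = l then sz i else 0)"
proof -
  have fin: "finite {j. p j = Some l'}"
    by (rule finite_subset[OF _ assms(2)]) auto
  show ?thesis
  proof (cases "l' = l")
    case True
    have "{j. (p(i := Some l)) j = Some l'} = insert i {j. p j = Some l'}"
      using True by auto
    moreover have "i \<notin> {j. p j = Some l'}" using assms by auto
    ultimately show ?thesis using True fin unfolding load_def by simp
  next
    case False
    have "{j. (p(i := Some l)) j = Some l'} = {j. p j = Some l'}"
      using False assms by auto
    then show ?thesis using False unfolding load_def by simp
  qed
qed

lemma load_remove:
  assumes "p i = Some l" "finite {j. p j \<noteq> None}"
  shows "load sz (p(i := None)) l' = load sz p l' - (if l' = l then sz i else 0)"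
proof -
  have fin: "finite {j. p j = Some l'}"
    by (rule finite_subset[OF _ assms(2)]) auto
  show ?thesis
  proof (cases "l' = l")
    case True
    have "{j. (p(i := None)) j = Some l'} = {j. p j = Some l'} - {i}"
      using True by auto
    moreover have "i \<in> {j. p j = Some l'}" using assms True by auto
    ultimately show ?thesis using True fin unfolding load_def by (simp add: sum_diff1)
  next
    case False
    have "{j. (p(i := None)) j = Some l'} = {j. p j = Some l'}"
      using False assms by auto
    then show ?thesis using False unfolding load_def by simp
  qed
qed

lemma ff_fst:
  "length xs \<le> length fr \<Longrightarrow> map fst (first_fit sz ord fr ld xs) = xs"
proof (induction xs arbitrary: ord fr ld)
  case Nil then show ?case by simp
next
  case (Cons x xs)
  show ?case
  proof (cases "find (\<lambda>b. ld b + sz x \<le> 1) ord")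
    case None
    then obtain b fr' where fr: "fr = b # fr'" using Cons.prems by (cases fr) auto
    then show ?thesis using None Cons by auto
  next
    case (Some b)
    then show ?thesis using Cons by auto
  qed
qed

lemma ff_snd:
  "(x, b) \<in> set (first_fit sz ord fr ld xs) \<Longrightarrow> b \<in> set ord \<union> set fr"
proof (induction xs arbitrary: ord fr ld)
  case Nil then show ?case by simp
next
  case (Cons y xs)
  show ?case
  proof (cases "find (\<lambda>b. ld b + sz y \<le> 1) ord")
    case None
    show ?thesis
    proof (cases fr)
      case Nil then show ?thesis using None Cons.prems by simp
    next
      case (Cons b' fr')
      then show ?thesis using None Cons.prems Cons.IH[of "ord @ [b']" fr'] by auto
    qed
  next
    case (Some b')
    then have "b' \<in> set ord" by (metis find_Some_iff nth_mem)
    then show ?thesis using Some Cons by auto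
  qed
qed

definition asum :: "(nat \<Rightarrow> real) \<Rightarrow> (nat \<times> nat) list \<Rightarrow> nat \<Rightarrow> real" where
  "asum sz A b = sum_list (map (sz \<circ> fst) (filter (\<lambda>p. snd p = b) A))"

lemma asum_Nil[simp]: "asum sz [] b = 0" by (simp add: asum_def)
lemma asum_Cons[simp]: "asum sz ((x, b') # A) b = (if b' = b then sz x else 0) + asum sz A b"
  by (simp add: asum_def)

lemma ff_key:
  assumes "Q \<subseteq> set ord" "finite Q" "card {b\<in>Q. ld b < f} \<le> 1"
    "\<forall>b\<in>set fr. ld b = 0" "set fr \<inter> set ord = {}" "distinct fr"
    "\<forall>x\<in>set xs. 0 \<le> sz x \<and> (sz x \<le> 1 - f \<or> f \<le> sz x)"
  shows "card {b \<in> Q \<union> (set (map snd (first_fit sz ord fr ld xs)) - set ord).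
                ld b + asum sz (first_fit sz ord fr ld xs) b < f} \<le> 1"
  using assms
proof (induction xs arbitrary: Q ord fr ld)
  case Nil then show ?case by simp
next
  case (Cons x xs)
  show ?case
  proof (cases "find (\<lambda>b. ld b + sz x \<le> 1) ord")
    case (Some b0)
    have b0: "b0 \<in> set ord" using Some by (metis find_Some_iff nth_mem)
    define ld' where "ld' = ld(b0 := ld b0 + sz x)"
    define R where "R = first_fit sz ord fr ld' xs"
    have A: "first_fit sz ord fr ld (x # xs) = (x, b0) # R" using Some by (simp add: R_def ld'_def)
    have sx: "0 \<le> sz x" using Cons.prems by simp
    have "{b\<in>Q. ld' b < f} \<subseteq> {b\<in>Q. ld b < f}" using sx by (auto simp: ld'_def split: if_splits)
    then have c: "card {b\<in>Q. ld' b < f} \<le> 1"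
      using Cons.prems(2,3) card_mono[of "{b\<in>Q. ld b < f}" "{b\<in>Q. ld' b < f}"] by simp
    have fr0: "\<forall>b\<in>set fr. ld' b = 0" using Cons.prems(4,5) b0 by (auto simp: ld'_def)
    have IH: "card {b \<in> Q \<union> (set (map snd R) - set ord). ld' b + asum sz R b < f} \<le> 1"
      unfolding R_def using Cons.IH[OF Cons.prems(1,2) c fr0 Cons.prems(5,6)] Cons.prems(7) by simp
    have eq: "ld b + asum sz ((x, b0) # R) b = ld' b + asum sz R b" for b
      by (simp add: ld'_def)
    have "Q \<union> (set (map snd ((x, b0) # R)) - set ord) = Q \<union> (set (map snd R) - set ord)"
      using b0 by auto
    then show ?thesis unfolding A eq using IH by simp
  next
    case None
    have nofit: "\<forall>b\<in>set ord. \<not> ld b + sz x \<le> 1" using None by (simp add: find_None_iff)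
    show ?thesis
    proof (cases fr)
      case Nil
      then show ?thesis using None Cons.prems(3) by simp
    next
      case (Cons b0 fr')
      define ld' where "ld' = ld(b0 := sz x)"
      define ord' where "ord' = ord @ [b0]"
      define R where "R = first_fit sz ord' fr' ld' xs"
      have A: "first_fit sz ord fr ld (x # xs) = (x, b0) # R" using None Cons
        by (simp add: R_def ld'_def ord'_def)
      have b0: "b0 \<notin> set ord" "ld b0 = 0" using Cons Cons.prems(4,5) by auto
      have sx: "0 \<le> sz x" "sz x \<le> 1 - f \<or> f \<le> sz x" using Cons.prems(7) by auto
      have Qeq: "\<forall>b\<in>Q. ld' b = ld b" using Cons.prems(1) b0 by (auto simp: ld'_def)
      have c: "card {b\<in>insert b0 Q. ld' b < f} \<le> 1"
      proof (cases "sz x \<le> 1 - f")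
        case True
        have "{b\<in>insert b0 Q. ld' b < f} \<subseteq> {b0}"
        proof
          fix b assume b: "b \<in> {b\<in>insert b0 Q. ld' b < f}"
          show "b \<in> {b0}"
          proof (rule ccontr)
            assume "b \<notin> {b0}"
            then have "b \<in> Q" "ld b < f" using b Qeq by auto
            moreover have "\<not> ld b + sz x \<le> 1" using nofit Cons.prems(1) \<open>b \<in> Q\<close> by auto
            ultimately show False using True by linarith
          qed
        qed
        then show ?thesis using card_mono[of "{b0}"] by fastforce
      next
        case False
        then have "f \<le> sz x" using sx by simp
        then have "{b\<in>insert b0 Q. ld' b < f} = {b\<in>Q. ld b < f}"
          using Qeq by (auto simp: ld'_def)
        then show ?thesis using Cons.prems(3) by simp
      qed
      have IH: "card {b \<in> insert b0 Q \<union> (set (map snd R) - set ord'). ld' b + asum sz R b < f} \<le> 1"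
        unfolding R_def
        apply (rule Cons.IH)
        using Cons.prems Cons b0 c
        apply (simp_all add: ord'_def ld'_def)
        apply auto
        done
      have eq: "ld b + asum sz ((x, b0) # R) b = ld' b + asum sz R b" for b
        using b0 by (simp add: ld'_def)
      have "Q \<union> (set (map snd ((x, b0) # R)) - set ord) = insert b0 Q \<union> (set (map snd R) - set ord')"
        using b0 by (auto simp: ord'_def)
      then show ?thesis unfolding A eq using IH by simp
    qed
  qed
qed

definition invc :: "real \<Rightarrow> (nat \<Rightarrow> real) \<Rightarrow> nat \<Rightarrow> (nat \<Rightarrow> loc option) \<Rightarrow> (nat \<Rightarrow> nat) \<Rightarrow> (nat \<Rightarrow> bool) \<Rightarrow> nat \<Rightarrow> bool" where
  "invc \<alpha> sz n p cl gd g \<longleftrightarrow> (\<forall>j. p j \<noteq> None \<longrightarrow> j < n) \<and>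
   (\<forall>j k. p j = Some (Junk k) \<longrightarrow> k \<le> g) \<and>
   (\<forall>b. is_open p b \<longrightarrow> cl b < g) \<and>
   (\<forall>b. is_open p b \<and> gd b \<longrightarrow> \<alpha> \<le> load sz p (Bin b)) \<and>
   (\<forall>b. is_open p b \<and> \<not> gd b \<longrightarrow> load sz p (Bin b) < fpar (cl b)) \<and>
   (\<forall>j b. p j = Some (Bin b) \<longrightarrow> (1/2::real)^Suc (cl b) < sz j \<and> sz j \<le> (1/2)^(cl b)) \<and>
   (\<forall>b1 b2. is_open p b1 \<and> is_open p b2 \<and> \<not> gd b1 \<and> \<not> gd b2 \<and>
       cl b1 = cl b2 \<longrightarrow> b1 = b2)"

definition ainv :: "real \<Rightarrow> (nat \<Rightarrow> real) \<Rightarrow> nat \<Rightarrow> state \<Rightarrow> bool" where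
  "ainv \<alpha> sz n \<sigma> \<longleftrightarrow> invc \<alpha> sz n (pos \<sigma>) (cls \<sigma>) (good \<sigma>) (gk \<sigma>)"

lemma fin_dom: "\<forall>j. p j \<noteq> None \<longrightarrow> j < (n::nat) \<Longrightarrow> finite {j. p j \<noteq> None}"
  by (rule finite_subset[of _ "{..<n}"]) auto

lemma fin_loc: "\<forall>j. p j \<noteq> None \<longrightarrow> j < (n::nat) \<Longrightarrow> finite {j. p j = Some l}"
  by (rule finite_subset[of _ "{..<n}"]) auto

lemma new_guess_ge: "gk \<sigma> \<le> new_guess \<sigma>"
  by (simp add: new_guess_def)

lemma open_upd: "is_open (p(i := Some l)) b \<longleftrightarrow> (if l = Bin b then True else \<exists>j. j \<noteq> i \<and> p j = Some (Bin b))"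
  unfolding is_open_def by auto

lemma open_upd2: "p i = None \<Longrightarrow> is_open (p(i := Some l)) b \<longleftrightarrow> is_open p b \<or> l = Bin b"
proof -
  assume "p i = None"
  then show ?thesis unfolding is_open_def
    by (cases "l = Bin b") (auto, metis option.distinct(1))+
qed

lemma load_nonneg:
  assumes "\<forall>j. p j \<noteq> None \<longrightarrow> j < n" "\<forall>j<n. 0 \<le> sz j"
  shows "0 \<le> load sz p l"
  unfolding load_def using assms by (intro sum_nonneg) auto

lemma inv_arr_junk:
  assumes H: "invc \<alpha> sz n p cl gd g" and i: "i < n" "p i = None" and k: "g \<le> k"
  shows "invc \<alpha> sz n (p(i := Some (Junk k))) cl gd k"
proof -
  have fin: "finite {j. p j \<noteq> None}" using H fin_dom unfolding invc_def by blast
  have ld: "load sz (p(i := Some (Junk k))) (Bin b) = load sz p (Bin b)" for b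
    using load_add[OF i(2) fin] by simp
  have op: "is_open (p(i := Some (Junk k))) b = is_open p b" for b
    using open_upd2[of p i, OF i(2)] by simp
  show ?thesis using H i k unfolding invc_def ld op
    by (auto split: if_splits) fastforce+
qed

lemma inv_arr_bad:
  assumes H: "invc \<alpha> sz n p cl gd g" and i: "i < n" "p i = None" and k: "g \<le> k"
    and a: "\<alpha> < 1/2" and s: "0 < sz i" "sz i \<le> 1" and c: "c = item_class (sz i)"
    and b: "is_open p b" "cl b = c" "\<not> gd b"
  shows "invc \<alpha> sz n (p(i := Some (Bin b))) cl (gd(b := fpar c \<le> load sz p (Bin b) + sz i)) k"
proof -
  have fin: "finite {j. p j \<noteq> None}" using H fin_dom unfolding invc_def by blast
  have ld: "load sz (p(i := Some (Bin b))) (Bin b') = load sz p (Bin b') + (if b' = b then sz i else 0)" for b'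
    using load_add[OF i(2) fin] by simp
  have op: "is_open (p(i := Some (Bin b))) b' = is_open p b'" for b'
    using open_upd2[of p i, OF i(2)] b by auto
  have cs: "(1/2::real) ^ Suc c < sz i \<and> sz i \<le> (1/2) ^ c" using item_class_spec[OF s] c by simp
  have f: "1/2 \<le> fpar c" by (rule fpar_ge)
  show ?thesis using H i k unfolding invc_def ld op
    apply (intro conjI)
    subgoal by auto
    subgoal by (auto; meson le_trans)
    subgoal by auto
    subgoal using f a b by auto
    subgoal using b by auto
    subgoal using cs b by auto
    subgoal using b by (auto simp del: fun_upd_apply) (metis fun_upd_apply)+
    done
qed

lemma inv_arr_good:
  assumes H: "invc \<alpha> sz n p cl gd g" and i: "i < n" "p i = None" and k: "g \<le> k"
    and s: "0 < sz i" "sz i \<le> 1" and c: "c = item_class (sz i)"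
    and b: "is_open p b" "cl b = c" "gd b"
  shows "invc \<alpha> sz n (p(i := Some (Bin b))) cl gd k"
proof -
  have fin: "finite {j. p j \<noteq> None}" using H fin_dom unfolding invc_def by blast
  have ld: "load sz (p(i := Some (Bin b))) (Bin b') = load sz p (Bin b') + (if b' = b then sz i else 0)" for b'
    using load_add[OF i(2) fin] by simp
  have op: "is_open (p(i := Some (Bin b))) b' = is_open p b'" for b'
    using open_upd2[of p i, OF i(2)] b by auto
  have cs: "(1/2::real) ^ Suc c < sz i \<and> sz i \<le> (1/2) ^ c" using item_class_spec[OF s] c by simp
  show ?thesis using H i k unfolding invc_def ld op
    apply (intro conjI)
    subgoal by auto
    subgoal by (auto; meson le_trans)
    subgoal by auto
    subgoal using s b by auto
    subgoal using b by auto
    subgoal using cs b by auto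
    subgoal using b by auto
    done
qed

lemma inv_arr_new:
  assumes H: "invc \<alpha> sz n p cl gd g" and i: "i < n" "p i = None" and k: "g \<le> k"
    and a: "\<alpha> < 1/2" and s: "0 < sz i" "sz i \<le> 1" and c: "c = item_class (sz i)" "c < k"
    and b: "\<not> is_open p b"
    and nb: "\<forall>b'. \<not> (is_open p b' \<and> cl b' = c \<and> \<not> gd b' \<and> load sz p (Bin b') \<le> 1 - sz i)"
  shows "invc \<alpha> sz n (p(i := Some (Bin b))) (cl(b := c)) (gd(b := fpar c \<le> sz i)) k"
proof -
  have fin: "finite {j. p j \<noteq> None}" using H fin_dom unfolding invc_def by blast
  have ld: "load sz (p(i := Some (Bin b))) (Bin b') = load sz p (Bin b') + (if b' = b then sz i else 0)" for b'
    using load_add[OF i(2) fin] by simp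
  have l0: "load sz p (Bin b) = 0" using load_nonopen[OF b] .
  have op: "is_open (p(i := Some (Bin b))) b' = (is_open p b' \<or> b' = b)" for b'
    using open_upd2[of p i, OF i(2)] by auto
  have cs: "(1/2::real) ^ Suc c < sz i \<and> sz i \<le> (1/2) ^ c" using item_class_spec[OF s] c by simp
  have fc: "(c = 0 \<and> fpar c \<le> sz i) \<or> (c \<noteq> 0 \<and> sz i \<le> 1 - fpar c)"
    using fpar_class cs by blast
  have f: "1/2 \<le> fpar c" by (rule fpar_ge)
  have pb: "p j \<noteq> Some (Bin b)" for j using b unfolding is_open_def by auto
  have I7: "b1 = b2" if "is_open p b1 \<or> b1 = b" "is_open p b2 \<or> b2 = b"
     "\<not> (gd(b := fpar c \<le> sz i)) b1" "\<not> (gd(b := fpar c \<le> sz i)) b2"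
     "(cl(b := c)) b1 = (cl(b := c)) b2" for b1 b2
  proof -
    have gen: "False" if "b1' = b" "b2' \<noteq> b" "is_open p b2'" "\<not> (fpar c \<le> sz i)" "\<not> gd b2'"
       "cl b2' = c" for b1' b2'
    proof -
      have "sz i \<le> 1 - fpar c" using fc that by auto
      moreover have "load sz p (Bin b2') < fpar (cl b2')" using H that unfolding invc_def by blast
      ultimately show False using nb that by force
    qed
    have H7: "\<forall>b1 b2. is_open p b1 \<and> is_open p b2 \<and> \<not> gd b1 \<and> \<not> gd b2 \<and>
       cl b1 = cl b2 \<longrightarrow> b1 = b2" using H unfolding invc_def by blast
    show ?thesis
    proof (cases "b1 = b")
      case True
      show ?thesis
      proof (rule ccontr)
        assume ne: "b1 \<noteq> b2"
        have "is_open p b2" "\<not> (fpar c \<le> sz i)" "\<not> gd b2" "cl b2 = c"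
          using that True ne by (auto split: if_splits)
        then show False using gen[of b1 b2] True ne by blast
      qed
    next
      case False
      show ?thesis
      proof (cases "b2 = b")
        case True
        have "is_open p b1" "\<not> (fpar c \<le> sz i)" "\<not> gd b1" "cl b1 = c"
          using that True False by (auto split: if_splits)
        then show ?thesis using gen[of b2 b1] True False by blast
      next
        case F2: False
        have "is_open p b1" "is_open p b2" "\<not> gd b1" "\<not> gd b2" "cl b1 = cl b2"
          using that F2 False by (auto split: if_splits)
        then show ?thesis using H7 by blast
      qed
    qed
  qed
  show ?thesis using H i k unfolding invc_def ld op
    apply (intro conjI)
    subgoal by auto
    subgoal by (auto; meson le_trans)
    subgoal using c by auto
    subgoal using f a l0 by auto
    subgoal using l0 by auto
    subgoal using cs pb by (auto simp del: power_Suc)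
    subgoal using I7 by blast
    done
qed

lemma open_rm: "is_open (p(i := None)) b \<Longrightarrow> is_open p b"
  unfolding is_open_def by (metis fun_upd_apply option.distinct(1))

lemma inv_dep_plain:
  assumes H: "invc \<alpha> sz n p cl gd g" and i: "p i = Some l" and sz0: "\<forall>j<n. 0 \<le> sz j"
    and nm: "\<not> (\<exists>b. l = Bin b \<and> gd b \<and> load sz (p(i := None)) l < \<alpha>)"
  shows "invc \<alpha> sz n (p(i := None)) cl gd g"
proof -
  note HH = H[unfolded invc_def]
  have H1: "\<forall>j. p j \<noteq> None \<longrightarrow> j < n" using HH by blast
  have H4: "\<forall>b. is_open p b \<and> gd b \<longrightarrow> \<alpha> \<le> load sz p (Bin b)" using HH by blast
  have H5: "\<forall>b. is_open p b \<and> \<not> gd b \<longrightarrow> load sz p (Bin b) < fpar (cl b)" using HH by blast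
  have H2: "\<forall>j k. p j = Some (Junk k) \<longrightarrow> k \<le> g" using HH by blast
  have H3: "\<forall>b. is_open p b \<longrightarrow> cl b < g" using HH by blast
  have H6: "\<forall>j b. p j = Some (Bin b) \<longrightarrow> (1/2::real)^Suc (cl b) < sz j \<and> sz j \<le> (1/2)^(cl b)" using HH by blast
  have H7: "\<forall>b1 b2. is_open p b1 \<and> is_open p b2 \<and> \<not> gd b1 \<and> \<not> gd b2 \<and>
       cl b1 = cl b2 \<longrightarrow> b1 = b2" using HH by blast
  have fin: "finite {j. p j \<noteq> None}" using fin_dom[OF H1] .
  have "i < n" using H1 i by blast
  then have si: "0 \<le> sz i" using sz0 by blast
  have ld: "load sz (p(i := None)) l' = load sz p l' - (if l' = l then sz i else 0)" for l'
    by (rule load_remove[OF i fin])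
  have I4: "\<alpha> \<le> load sz (p(i := None)) (Bin b)" if "is_open (p(i := None)) b" "gd b" for b
  proof (cases "Bin b = l")
    case True then show ?thesis using nm that(2) by force
  next
    case False
    have "\<alpha> \<le> load sz p (Bin b)" using H4 open_rm[OF that(1)] that(2) by blast
    then show ?thesis using ld[of "Bin b"] False by simp
  qed
  have I5: "load sz (p(i := None)) (Bin b) < fpar (cl b)" if "is_open (p(i := None)) b" "\<not> gd b" for b
  proof -
    have "load sz p (Bin b) < fpar (cl b)" using H5 open_rm[OF that(1)] that(2) by blast
    then show ?thesis using ld[of "Bin b"] si by (simp split: if_splits)
  qed
  show ?thesis unfolding invc_def
    apply (intro conjI)
    subgoal using H1 by simp
    subgoal using H2 by simp
    subgoal using H3 open_rm by blast
    subgoal using I4 by blast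
    subgoal using I5 by blast
    subgoal using H6 by simp
    subgoal using H7 open_rm by blast
    done
qed

lemma asum_eq_sum:
  assumes "distinct (map fst A)"
  shows "asum sz A b = sum sz {j. (j, b) \<in> set A}"
proof -
  have d: "distinct (map fst (filter (\<lambda>p. snd p = b) A))"
    using distinct_map_filter[OF assms] .
  have "asum sz A b = sum_list (map sz (map fst (filter (\<lambda>p. snd p = b) A)))"
    by (simp add: asum_def)
  also have "\<dots> = sum sz (set (map fst (filter (\<lambda>p. snd p = b) A)))"
    by (rule sum_list_distinct_conv_sum_set[OF d])
  also have "set (map fst (filter (\<lambda>p. snd p = b) A)) = {j. (j, b) \<in> set A}"
    by force
  finally show ?thesis .
qed

lemma asum_nonneg: "\<forall>x\<in>set (map fst A). 0 \<le> sz x \<Longrightarrow> 0 \<le> asum sz A b"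
  unfolding asum_def by (induction A) auto

lemma asum_notin: "b \<notin> set (map snd A) \<Longrightarrow> asum sz A b = 0"
  unfolding asum_def by (induction A) auto

lemma inv_migrate:
  assumes H: "invc \<alpha> sz n p cl gd g" and a: "0 < \<alpha>" "\<alpha> < 1/2"
    and sz0: "\<forall>j<n. 0 \<le> sz j"
    and i: "p i = Some (Bin b)" and p': "p' = p(i := None)" and gb: "gd b"
    and c: "c = cl b" and f: "f = fpar c"
    and dM: "distinct M" and M: "set M = {j. p' j = Some (Bin b)}"
    and bl: "set badl = {b'. is_open p' b' \<and> cl b' = c \<and> \<not> gd b'}"
    and gl: "set goodl = {b'. is_open p' b' \<and> cl b' = c \<and> gd b' \<and> b' \<noteq> b}"
    and fr: "distinct fr" "length M \<le> length fr" "\<forall>b'\<in>set fr. \<not> is_open p' b' \<and> b' \<noteq> b"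
    and ord: "ord = badl @ goodl"
    and A: "A = first_fit sz ord fr (\<lambda>b'. load sz p' (Bin b')) M"
    and P: "P = (\<lambda>j. case map_of A j of Some b'' \<Rightarrow> Some (Bin b'') | None \<Rightarrow> p' j)"
    and NB: "newb = set (map snd A) - set ord"
    and CL: "CL = (\<lambda>b'. if b' \<in> newb then c else cl b')"
    and GD: "GD = (\<lambda>b'. if b' \<in> newb then f \<le> load sz P (Bin b')
                        else if b' \<in> set ord then gd b' \<or> f \<le> load sz P (Bin b')
                        else gd b')"
  shows "invc \<alpha> sz n P CL GD g"
proof -
  note HH = H[unfolded invc_def]
  have H1: "\<forall>j. p j \<noteq> None \<longrightarrow> j < n" using HH by blast
  have H2: "\<forall>j k. p j = Some (Junk k) \<longrightarrow> k \<le> g" using HH by blast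
  have H3: "\<forall>b. is_open p b \<longrightarrow> cl b < g" using HH by blast
  have H4: "\<forall>b. is_open p b \<and> gd b \<longrightarrow> \<alpha> \<le> load sz p (Bin b)" using HH by blast
  have H5: "\<forall>b. is_open p b \<and> \<not> gd b \<longrightarrow> load sz p (Bin b) < fpar (cl b)" using HH by blast
  have H6: "\<forall>j b. p j = Some (Bin b) \<longrightarrow> (1/2::real)^Suc (cl b) < sz j \<and> sz j \<le> (1/2)^(cl b)" using HH by blast
  have H7: "\<forall>b1 b2. is_open p b1 \<and> is_open p b2 \<and> \<not> gd b1 \<and> \<not> gd b2 \<and>
       cl b1 = cl b2 \<longrightarrow> b1 = b2" using HH by blast
  have fin: "finite {j. p j \<noteq> None}" using fin_dom[OF H1] .
  have op'p: "is_open p b'" if "is_open p' b'" for b' using that open_rm p' by blast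
  have p'p: "p j = Some l" if "p' j = Some l" for j l using that p' by (auto split: if_splits)
  have ldp': "load sz p' (Bin b') = load sz p (Bin b')" if "b' \<noteq> b" for b'
    using load_remove[OF i fin, of sz "Bin b'"] that p' by simp
  have fst: "map fst A = M" unfolding A by (rule ff_fst[OF fr(2)])
  have dA: "distinct (map fst A)" using fst dM by simp
  have snd: "b'' \<in> set ord \<union> set fr" if "(x, b'') \<in> set A" for x b''
    using ff_snd that unfolding A by blast
  have bnord: "b \<notin> set ord" using ord bl gl gb by auto
  have bnfr: "b \<notin> set fr" using fr(3) by auto
  have ordopen: "is_open p' b'" "cl b' = c" if "b' \<in> set ord" for b'
    using that ord bl gl by auto
  have frord: "set fr \<inter> set ord = {}" using fr(3) ordopen by auto
  have nbfr: "newb \<subseteq> set fr" using NB snd by force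
  have nbnopen: "\<not> is_open p' b'" if "b' \<in> newb" for b' using that nbfr fr(3) by auto
  have mapA: "map_of A j = Some b'' \<longleftrightarrow> (j, b'') \<in> set A" for j b''
    using map_of_eq_Some_iff[OF dA] by blast
  have Mmoved: "(\<exists>b''. (j, b'') \<in> set A) \<longleftrightarrow> j \<in> set M" for j
    using fst by force
  have Pj: "P j = (if j \<in> set M then Some (Bin (the (map_of A j))) else p' j)" for j
  proof (cases "j \<in> set M")
    case True
    then obtain b'' where "(j, b'') \<in> set A" using Mmoved by blast
    then have "map_of A j = Some b''" using mapA by blast
    then show ?thesis using True P by simp
  next
    case False
    have "fst ` set A = set M" using fst by (metis set_map)
    then have "map_of A j = None" using False by (simp add: map_of_eq_None_iff)
    then show ?thesis using False P by simp
  qed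
  have szM: "0 \<le> sz j \<and> (1/2::real)^Suc c < sz j \<and> sz j \<le> (1/2)^c" if "j \<in> set M" for j
  proof -
    have "p j = Some (Bin b)" using that M p'p by blast
    then have "j < n" "(1/2::real)^Suc c < sz j \<and> sz j \<le> (1/2)^c" using H1 H6 c by auto
    then show ?thesis using sz0 by auto
  qed
  have ldP: "load sz P (Bin b'') = load sz p' (Bin b'') + asum sz A b''" if "b'' \<noteq> b" for b''
  proof -
    have eq: "{j. P j = Some (Bin b'')} = {j. p' j = Some (Bin b'')} \<union> {j. (j, b'') \<in> set A}"
    proof (intro set_eqI iffI)
      fix j assume jj: "j \<in> {j. P j = Some (Bin b'')}"
      show "j \<in> {j. p' j = Some (Bin b'')} \<union> {j. (j, b'') \<in> set A}"
      proof (cases "j \<in> set M")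
        case True
        then obtain x where x: "map_of A j = Some x" using Mmoved mapA by blast
        then have "x = b''" using jj Pj[of j] True by simp
        then show ?thesis using x mapA by blast
      next
        case False
        then show ?thesis using jj Pj[of j] by simp
      qed
    next
      fix j assume j: "j \<in> {j. p' j = Some (Bin b'')} \<union> {j. (j, b'') \<in> set A}"
      show "j \<in> {j. P j = Some (Bin b'')}"
      proof (cases "j \<in> set M")
        case True
        then have "p' j = Some (Bin b)" using M by blast
        then have "(j, b'') \<in> set A" using j that by auto
        then have "map_of A j = Some b''" using mapA by blast
        then show ?thesis using Pj[of j] True by simp
      next
        case False
        then have "(j, b'') \<notin> set A" using Mmoved by blast
        then show ?thesis using Pj[of j] False j by simp
      qed
    qed
    have f1: "finite {j. p' j = Some (Bin b'')}"
      by (rule finite_subset[OF _ fin]) (auto dest: p'p)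
    have f2: "finite {j. (j, b'') \<in> set A}"
      by (rule finite_subset[of _ "fst ` set A"]) force+
    have dj: "{j. p' j = Some (Bin b'')} \<inter> {j. (j, b'') \<in> set A} = {}"
    proof (rule ccontr)
      assume "\<not> ?thesis"
      then obtain x where "p' x = Some (Bin b'')" "(x, b'') \<in> set A" by auto
      then have "x \<in> set M" using Mmoved by blast
      then have "p' x = Some (Bin b)" using M by blast
      then show False using \<open>p' x = Some (Bin b'')\<close> that by simp
    qed
    show ?thesis unfolding load_def eq sum.union_disjoint[OF f1 f2 dj] asum_eq_sum[OF dA] ..
  qed
  have OP: "(is_open p' b'' \<and> b'' \<noteq> b) \<or> b'' \<in> newb" if opP: "is_open P b''" for b''
  proof -
    obtain j where j: "P j = Some (Bin b'')" using opP unfolding is_open_def by blast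
    show ?thesis
    proof (cases "j \<in> set M")
      case True
      then obtain x where x: "map_of A j = Some x" using Mmoved mapA by blast
      then have "x = b''" using j Pj[of j] True by simp
      then have jb: "(j, b'') \<in> set A" using x mapA by blast
      then have "b'' \<in> set (map snd A)" by force
      then show ?thesis using ordopen bnord NB by blast
    next
      case False
      then have "p' j = Some (Bin b'')" using j Pj[of j] by simp
      moreover have "b'' \<noteq> b" using False M calculation by auto
      ultimately show ?thesis unfolding is_open_def by blast
    qed
  qed
  have asn: "0 \<le> asum sz A b''" for b''
    using asum_nonneg[of A sz b''] fst szM by auto
  have fge: "1/2 \<le> f" using f fpar_ge by simp
  have bopen: "is_open p b" using i unfolding is_open_def by blast
  have cg: "c < g" using H3 bopen c by blast
  have nbord: "b'' \<notin> set ord" if "b'' \<in> newb" for b'' using that NB by blast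
  have other: "load sz P (Bin b'') = load sz p (Bin b'')" "CL b'' = cl b''" "GD b'' = gd b''"
    if "is_open p' b''" "b'' \<noteq> b" "b'' \<notin> set ord" "b'' \<notin> newb" for b''
  proof -
    have "b'' \<notin> set (map snd A)" using that NB by blast
    then show "load sz P (Bin b'') = load sz p (Bin b'')"
      using ldP[OF that(2)] asum_notin ldp'[OF that(2)] by simp
    show "CL b'' = cl b''" "GD b'' = gd b''" using that CL GD by auto
  qed
  have otherc: "cl b'' \<noteq> c"
    if "is_open p' b''" "b'' \<noteq> b" "b'' \<notin> set ord" for b''
    using that ord bl gl by auto
  have I1: "\<forall>j. P j \<noteq> None \<longrightarrow> j < n"
  proof (intro allI impI)
    fix j assume "P j \<noteq> None"
    then have "p' j \<noteq> None" using Pj[of j] M by (auto split: if_splits)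
    then show "j < n" using H1 p'p by blast
  qed
  have I2: "\<forall>j k. P j = Some (Junk k) \<longrightarrow> k \<le> g"
  proof (intro allI impI)
    fix j k assume "P j = Some (Junk k)"
    then have "p' j = Some (Junk k)" using Pj[of j] by (auto split: if_splits)
    then show "k \<le> g" using H2 p'p by blast
  qed
  have I3: "\<forall>b''. is_open P b'' \<longrightarrow> CL b'' < g"
  proof (intro allI impI)
    fix b'' assume "is_open P b''"
    then consider "is_open p' b''" "b'' \<notin> newb" | "b'' \<in> newb" using OP by blast
    then show "CL b'' < g"
    proof cases
      case 1 then show ?thesis using CL H3 op'p by auto
    next
      case 2 then show ?thesis using CL cg by auto
    qed
  qed
  have I4: "\<forall>b''. is_open P b'' \<and> GD b'' \<longrightarrow> \<alpha> \<le> load sz P (Bin b'')"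
  proof (intro allI impI)
    fix b'' assume as: "is_open P b'' \<and> GD b''"
    show "\<alpha> \<le> load sz P (Bin b'')"
    proof (cases "b'' \<in> newb")
      case True
      then have "f \<le> load sz P (Bin b'')" using as GD by simp
      then show ?thesis using fge a by linarith
    next
      case False
      then have o: "is_open p' b''" "b'' \<noteq> b" using OP as by auto
      show ?thesis
      proof (cases "b'' \<in> set ord")
        case True
        then have "gd b'' \<or> f \<le> load sz P (Bin b'')" using as GD False by simp
        then show ?thesis
        proof
          assume "gd b''"
          then have "\<alpha> \<le> load sz p (Bin b'')" using H4 op'p[OF o(1)] by blast
          then show ?thesis using ldP[OF o(2)] ldp'[OF o(2)] asn[of b''] by linarith
        next
          assume "f \<le> load sz P (Bin b'')"
          then show ?thesis using fge a by linarith
        qed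
      next
        case F2: False
        have "gd b''" using as other[OF o F2 False] by simp
        then show ?thesis using H4 op'p[OF o(1)] other[OF o F2 False] by simp
      qed
    qed
  qed
  have I5: "\<forall>b''. is_open P b'' \<and> \<not> GD b'' \<longrightarrow> load sz P (Bin b'') < fpar (CL b'')"
  proof (intro allI impI)
    fix b'' assume as: "is_open P b'' \<and> \<not> GD b''"
    show "load sz P (Bin b'') < fpar (CL b'')"
    proof (cases "b'' \<in> newb")
      case True
      then show ?thesis using as GD CL f by auto
    next
      case False
      then have o: "is_open p' b''" "b'' \<noteq> b" using OP as by auto
      show ?thesis
      proof (cases "b'' \<in> set ord")
        case True
        then show ?thesis using as GD CL False f ordopen(2)[OF True] by auto
      next
        case F2: False
        have "\<not> gd b''" using as other[OF o F2 False] by simp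
        then show ?thesis using H5 op'p[OF o(1)] other[OF o F2 False] by simp
      qed
    qed
  qed
  have I6: "\<forall>j b''. P j = Some (Bin b'') \<longrightarrow> (1/2::real)^Suc (CL b'') < sz j \<and> sz j \<le> (1/2)^(CL b'')"
  proof (intro allI impI)
    fix j b'' assume as: "P j = Some (Bin b'')"
    show "(1/2::real)^Suc (CL b'') < sz j \<and> sz j \<le> (1/2)^(CL b'')"
    proof (cases "j \<in> set M")
      case True
      then obtain x where x: "map_of A j = Some x" using Mmoved mapA by blast
      then have "x = b''" using as Pj[of j] True by simp
      then have jb: "(j, b'') \<in> set A" using x mapA by blast
      then have "b'' \<in> set (map snd A)" by force
      then have "CL b'' = c" using CL NB ordopen(2) by auto
      then show ?thesis using szM[OF True] by simp
    next
      case False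
      then have pj: "p' j = Some (Bin b'')" using as Pj[of j] by simp
      then have "is_open p' b''" unfolding is_open_def by blast
      then have "b'' \<notin> newb" using nbnopen by blast
      then show ?thesis using CL H6 p'p[OF pj] by simp
    qed
  qed
  have I7: "\<forall>b1 b2. is_open P b1 \<and> is_open P b2 \<and> \<not> GD b1 \<and> \<not> GD b2 \<and>
       CL b1 = CL b2 \<longrightarrow> b1 = b2"
  proof -
    define ld where "ld = (\<lambda>b'. load sz p' (Bin b'))"
    define KS where "KS = {b'' \<in> set badl \<union> (set (map snd A) - set ord). ld b'' + asum sz A b'' < f}"
    have cb: "card {b'\<in>set badl. ld b' < f} \<le> 1"
    proof -
      have "\<forall>x\<in>{b'\<in>set badl. ld b' < f}. \<forall>y\<in>{b'\<in>set badl. ld b' < f}. x = y"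
        using bl H7 op'p by auto
      then show ?thesis using card_le_Suc0_iff_eq[of "{b'\<in>set badl. ld b' < f}"] by simp
    qed
    have fr0: "\<forall>b\<in>set fr. ld b = 0" using fr(3) load_nonopen ld_def by simp
    have itm: "\<forall>x\<in>set M. 0 \<le> sz x \<and> (sz x \<le> 1 - f \<or> f \<le> sz x)"
      using szM fpar_class f by blast
    have K: "card KS \<le> 1"
      using ff_key[of "set badl" ord ld f fr M sz] ord cb fr0 frord fr(1) itm
      unfolding KS_def A ld_def by auto
    have finKS: "finite KS" unfolding KS_def by auto
    have XK: "b'' \<in> KS" if "is_open P b''" "\<not> GD b''" "b'' \<in> set ord \<or> b'' \<in> newb" for b''
    proof (cases "b'' \<in> newb")
      case True
      then have "b'' \<noteq> b" using nbfr bnfr by blast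
      moreover have "load sz P (Bin b'') < f" using that True GD by auto
      ultimately show ?thesis using ldP True NB unfolding KS_def ld_def by auto
    next
      case False
      then have o: "b'' \<in> set ord" using that by blast
      then have "b'' \<noteq> b" using bnord by blast
      moreover have "\<not> gd b''" "load sz P (Bin b'') < f" using that o False GD by auto
      moreover have "b'' \<in> set badl" using calculation ordopen[OF o] bl by auto
      ultimately show ?thesis using ldP unfolding KS_def ld_def by auto
    qed
    have CLX: "CL b'' = c" if "b'' \<in> set ord \<or> b'' \<in> newb" for b''
      using that CL ordopen(2) by auto
    show ?thesis
    proof (intro allI impI)
      fix b1 b2 assume as: "is_open P b1 \<and> is_open P b2 \<and> \<not> GD b1 \<and> \<not> GD b2 \<and> CL b1 = CL b2"
      show "b1 = b2"
      proof (cases "b1 \<in> set ord \<or> b1 \<in> newb")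
        case X1: True
        show ?thesis
        proof (cases "b2 \<in> set ord \<or> b2 \<in> newb")
          case True
          then have "b1 \<in> KS" "b2 \<in> KS" using XK X1 as by auto
          then show ?thesis using K finKS card_le_Suc0_iff_eq[of KS] by auto
        next
          case False
          then have o: "is_open p' b2" "b2 \<noteq> b" using OP as by auto
          have "CL b2 \<noteq> c" using other(2)[OF o] otherc[OF o] False by auto
          then show ?thesis using as CLX[OF X1] by simp
        qed
      next
        case F1: False
        then have o1: "is_open p' b1" "b1 \<noteq> b" using OP as by auto
        show ?thesis
        proof (cases "b2 \<in> set ord \<or> b2 \<in> newb")
          case True
          have "CL b1 \<noteq> c" using other(2)[OF o1] otherc[OF o1] F1 by auto
          then show ?thesis using as CLX[OF True] by simp
        next
          case False
          then have o2: "is_open p' b2" "b2 \<noteq> b" using OP as by auto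
          have "is_open p b1" "is_open p b2" "\<not> gd b1" "\<not> gd b2" "cl b1 = cl b2"
            using as other(2,3)[OF o1] other(2,3)[OF o2] F1 False op'p o1 o2 by auto
          then show ?thesis using H7 by blast
        qed
      qed
    qed
  qed
  show ?thesis unfolding invc_def using I1 I2 I3 I4 I5 I6 I7 by blast
qed

lemma step_inv:
  assumes st: "step \<alpha> sz \<sigma> e \<sigma>'" and H: "ainv \<alpha> sz n \<sigma>" and a: "0 < \<alpha>" "\<alpha> < 1/2"
    and szb: "\<forall>j<n. 0 \<le> sz j \<and> sz j \<le> 1"
    and ar: "\<forall>i. e = Arr i \<longrightarrow> i < n \<and> pos \<sigma> i = None"
  shows "ainv \<alpha> sz n \<sigma>'"
  using st
proof cases
  case (arr_junk k i)
  then show ?thesis using inv_arr_junk[of \<alpha> sz n "pos \<sigma>" "cls \<sigma>" "good \<sigma>" "gk \<sigma>" i k] H ar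
    new_guess_ge[of \<sigma>] unfolding ainv_def by simp
next
  case (arr_bad k i c b)
  have "i < n" "pos \<sigma> i = None" using ar arr_bad by auto
  then show ?thesis using inv_arr_bad[of \<alpha> sz n "pos \<sigma>" "cls \<sigma>" "good \<sigma>" "gk \<sigma>" i k c b] H
    new_guess_ge[of \<sigma>] arr_bad a szb unfolding ainv_def bad_cand_def by simp
next
  case (arr_good k i c b)
  have "i < n" "pos \<sigma> i = None" using ar arr_good by auto
  then show ?thesis using inv_arr_good[of \<alpha> sz n "pos \<sigma>" "cls \<sigma>" "good \<sigma>" "gk \<sigma>" i k c b] H
    new_guess_ge[of \<sigma>] arr_good a szb unfolding ainv_def good_cand_def by simp
next
  case (arr_new k i c b)
  have "i < n" "pos \<sigma> i = None" using ar arr_new by auto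
  then show ?thesis using inv_arr_new[of \<alpha> sz n "pos \<sigma>" "cls \<sigma>" "good \<sigma>" "gk \<sigma>" i k c b] H
    new_guess_ge[of \<sigma>] arr_new a szb unfolding ainv_def bad_cand_def by simp
next
  case (dep_plain i l p')
  then show ?thesis using inv_dep_plain[of \<alpha> sz n "pos \<sigma>" "cls \<sigma>" "good \<sigma>" "gk \<sigma>" i l] H szb
    unfolding ainv_def by simp
next
  case (dep_migrate i b p' c M badl goodl fr A)
  define ord where "ord = badl @ goodl"
  define P where "P = (\<lambda>j. case map_of A j of Some b'' \<Rightarrow> Some (Bin b'') | None \<Rightarrow> p' j)"
  define newb where "newb = set (map snd A) - set ord"
  define CL where "CL = (\<lambda>b'. if b' \<in> newb then c else cls \<sigma> b')"
  define GD where "GD = (\<lambda>b'. if b' \<in> newb then fpar c \<le> load sz P (Bin b')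
                        else if b' \<in> set ord then good \<sigma> b' \<or> fpar c \<le> load sz P (Bin b')
                        else good \<sigma> b')"
  have "invc \<alpha> sz n P CL GD (gk \<sigma>)"
    apply (rule inv_migrate[of \<alpha> sz n "pos \<sigma>" "cls \<sigma>" "good \<sigma>" "gk \<sigma>" i b p' c "fpar c" M badl goodl fr ord A P newb CL GD])
    using H unfolding ainv_def apply simp
    using a szb dep_migrate ord_def P_def newb_def CL_def GD_def by auto
  moreover have "\<sigma>' = \<sigma>\<lparr>pos := P, cls := CL, good := GD\<rparr>"
  proof -
    have s': "\<sigma>' = migrate_result sz (fpar c) c ord A (\<sigma>\<lparr>pos := p'\<rparr>)"
      using dep_migrate unfolding ord_def by blast
    have pp: "pos (\<sigma>\<lparr>pos := p'\<rparr>) = p'" "cls (\<sigma>\<lparr>pos := p'\<rparr>) = cls \<sigma>"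
      "good (\<sigma>\<lparr>pos := p'\<rparr>) = good \<sigma>" by simp_all
    show ?thesis unfolding s' migrate_result_def Let_def pp
      by (simp add: P_def newb_def CL_def GD_def)
  qed
  ultimately show ?thesis unfolding ainv_def by simp
qed

lemma ran_card_dom: "finite {j. p j \<noteq> None} \<Longrightarrow> card (ran p) \<le> card {j. p j \<noteq> None}"
proof -
  assume fin: "finite {j. p j \<noteq> None}"
  have "ran p = (\<lambda>j. the (p j)) ` {j. p j \<noteq> None}" unfolding ran_def by force
  then show ?thesis using card_image_le[OF fin] by simp
qed

lemma OPT_attained:
  assumes S: "S \<subseteq> {..<n}" and szb: "\<forall>j<n. 0 \<le> sz j \<and> sz j \<le> 1"
  shows "\<exists>asg :: nat \<Rightarrow> nat. (\<forall>i\<in>S. asg i < OPT sz S) \<and>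
                          (\<forall>b<OPT sz S. (\<Sum>i\<in>{i\<in>S. asg i = b}. sz i) \<le> 1)"
proof -
  let ?P = "\<lambda>k. \<exists>asg :: nat \<Rightarrow> nat. (\<forall>i\<in>S. asg i < k) \<and>
                          (\<forall>b<k. (\<Sum>i\<in>{i\<in>S. asg i = b}. sz i) \<le> 1)"
  have w1: "\<forall>i\<in>S. id i < n" using S by auto
  have w2: "(\<Sum>i\<in>{i\<in>S. id i = b}. sz i) \<le> 1" if b: "b < n" for b
  proof -
    have "{i\<in>S. id i = b} \<subseteq> {b}" by auto
    then have "{i\<in>S. id i = b} = {} \<or> {i\<in>S. id i = b} = {b}" by (rule subset_singletonD)
    moreover have "sz b \<le> 1" using szb b by blast
    ultimately show ?thesis by (elim disjE) (simp only: sum.empty sum.insert finite.emptyI, simp)+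
  qed
  have wit: "?P n" using w1 w2 by blast
  show ?thesis unfolding OPT_def by (rule LeastI[of ?P, OF wit])
qed

lemma sum_le_OPT:
  assumes S: "S \<subseteq> {..<n}" and szb: "\<forall>j<n. 0 \<le> sz j \<and> sz j \<le> 1"
  shows "(\<Sum>j\<in>S. sz j) \<le> real (OPT sz S)"
proof -
  obtain asg where a1: "\<forall>i\<in>S. asg i < OPT sz S"
    and a2: "\<forall>b<OPT sz S. (\<Sum>i\<in>{i\<in>S. asg i = b}. sz i) \<le> 1"
    using OPT_attained[OF S szb] by blast
  have finS: "finite S" using S finite_subset by blast
  have im: "asg ` S \<subseteq> {..<OPT sz S}" using a1 by auto
  have "(\<Sum>j\<in>S. sz j) = (\<Sum>b\<in>{..<OPT sz S}. (\<Sum>i\<in>{i\<in>S. asg i = b}. sz i))"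
    using sum.group[OF finS finite_lessThan im, of sz] by simp
  also have "\<dots> \<le> (\<Sum>b\<in>{..<OPT sz S}. 1)" by (rule sum_mono) (use a2 in simp)
  finally show ?thesis by simp
qed

lemma OPT_pos:
  assumes S: "S \<subseteq> {..<n}" and szb: "\<forall>j<n. 0 \<le> sz j \<and> sz j \<le> 1" and ne: "S \<noteq> {}"
  shows "1 \<le> OPT sz S"
proof -
  obtain asg where a1: "\<forall>i\<in>S. asg i < OPT sz S"
    using OPT_attained[OF S szb] by blast
  obtain x where "x \<in> S" using ne by blast
  then show ?thesis using a1 by fastforce
qed

lemma count_bins:
  assumes H: "invc \<alpha> sz n p cl gd g" and a: "0 < \<alpha>"
    and dS: "{j. p j \<noteq> None} \<subseteq> S" and S: "S \<subseteq> {..<n}" and szb: "\<forall>j<n. 0 \<le> sz j \<and> sz j \<le> 1"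
  shows "real (card (ran p)) \<le> (\<Sum>j\<in>S. sz j) / \<alpha> + 2 * real g + 1"
proof -
  note HH = H[unfolded invc_def]
  have H2: "\<forall>j k. p j = Some (Junk k) \<longrightarrow> k \<le> g" using HH by blast
  have H3: "\<forall>b. is_open p b \<longrightarrow> cl b < g" using HH by blast
  have H4: "\<forall>b. is_open p b \<and> gd b \<longrightarrow> \<alpha> \<le> load sz p (Bin b)" using HH by blast
  have H7: "\<forall>b1 b2. is_open p b1 \<and> is_open p b2 \<and> \<not> gd b1 \<and> \<not> gd b2 \<and>
       cl b1 = cl b2 \<longrightarrow> b1 = b2" using HH by blast
  have finS: "finite S" using S finite_subset by blast
  have fdom: "finite {j. p j \<noteq> None}" using finite_subset[OF dS finS] .
  have fdom': "finite (dom p)" using fdom unfolding dom_def by simp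
  have fran: "finite (ran p)" using finite_ran[OF fdom'] .
  define G where "G = {b. is_open p b \<and> gd b}"
  define B where "B = {b. is_open p b \<and> \<not> gd b}"
  have sub: "ran p \<subseteq> Junk ` {..g} \<union> Bin ` G \<union> Bin ` B"
  proof
    fix l assume "l \<in> ran p"
    then obtain j where j: "p j = Some l" unfolding ran_def by blast
    show "l \<in> Junk ` {..g} \<union> Bin ` G \<union> Bin ` B"
    proof (cases l)
      case (Junk k) then show ?thesis using H2 j by auto
    next
      case (Bin b)
      then have "is_open p b" using j unfolding is_open_def by blast
      then show ?thesis using Bin G_def B_def by (cases "gd b") auto
    qed
  qed
  have finBG: "finite (Bin ` G)" "finite (Bin ` B)"
  proof -
    have "Bin ` G \<subseteq> ran p" "Bin ` B \<subseteq> ran p"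
      unfolding G_def B_def is_open_def ran_def by auto
    then show "finite (Bin ` G)" "finite (Bin ` B)" using fran finite_subset by blast+
  qed
  have finG: "finite G" "finite B"
    using finBG finite_imageD[of Bin] inj_on_def by (metis loc.inject(2))+
  have cB: "card B \<le> g"
  proof -
    have "inj_on cl B" unfolding inj_on_def B_def using H7 by blast
    then have "card B = card (cl ` B)" by (simp add: card_image)
    also have "\<dots> \<le> card {..<g}" by (rule card_mono) (use H3 B_def in auto)
    finally show ?thesis by simp
  qed
  have cG: "\<alpha> * card G \<le> (\<Sum>j\<in>S. sz j)"
  proof -
    define L where "L = (\<lambda>b. {j. p j = Some (Bin b)})"
    have finL: "\<forall>b\<in>G. finite (L b)" unfolding L_def
      using fdom by (auto intro: finite_subset[OF _ fdom])
    have dis: "\<forall>b1\<in>G. \<forall>b2\<in>G. b1 \<noteq> b2 \<longrightarrow> L b1 \<inter> L b2 = {}" unfolding L_def by auto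
    have "\<alpha> * card G = (\<Sum>b\<in>G. \<alpha>)" by simp
    also have "\<dots> \<le> (\<Sum>b\<in>G. load sz p (Bin b))" by (rule sum_mono) (use H4 G_def in auto)
    also have "\<dots> = (\<Sum>b\<in>G. sum sz (L b))" unfolding load_def L_def by simp
    also have "\<dots> = sum sz (\<Union>(L ` G))" by (rule sum.UNION_disjoint[symmetric, OF finG(1) finL dis])
    also have "\<dots> \<le> sum sz S"
    proof (rule sum_mono2[OF finS])
      show "\<Union>(L ` G) \<subseteq> S" using dS unfolding L_def by auto
      fix x assume "x \<in> S - \<Union>(L ` G)"
      then show "0 \<le> sz x" using S szb by auto
    qed
    finally show ?thesis .
  qed
  have "card (ran p) \<le> card (Junk ` {..g} \<union> Bin ` G \<union> Bin ` B)"
    by (rule card_mono) (use sub finBG in auto)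
  also have "\<dots> \<le> card (Junk ` {..g}) + card (Bin ` G) + card (Bin ` B)"
    by (meson card_Un_le add_le_mono order_trans le_refl)
  also have "\<dots> \<le> (g + 1) + card G + card B"
    using card_image_le[of "{..g}" Junk] card_image_le[OF finG(1), of Bin] card_image_le[OF finG(2), of Bin]
    by simp
  finally have c1: "card (ran p) \<le> g + 1 + card G + card B" .
  have "real (card G) \<le> (\<Sum>j\<in>S. sz j) / \<alpha>" using cG a by (simp add: field_simps)
  then show ?thesis using c1 cB by linarith
qed

lemma step_dom:
  assumes st: "step \<alpha> sz \<sigma> e \<sigma>'"
  shows "(\<forall>i. e = Arr i \<longrightarrow> {j. pos \<sigma>' j \<noteq> None} = insert i {j. pos \<sigma> j \<noteq> None} \<and> gk \<sigma>' = new_guess \<sigma>) \<and>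
         (\<forall>i. e = Dep i \<longrightarrow> {j. pos \<sigma>' j \<noteq> None} = {j. pos \<sigma> j \<noteq> None} - {i} \<and> gk \<sigma>' = gk \<sigma>)"
  using st
proof cases
  case (dep_migrate i b p' c M badl goodl fr A)
  have fst: "map fst A = M" unfolding dep_migrate(17) by (rule ff_fst[OF dep_migrate(15)])
  have "fst ` set A = set M" using fst by (metis set_map)
  then have mo: "map_of A j \<noteq> None \<longleftrightarrow> j \<in> set M" for j by (simp add: map_of_eq_None_iff)
  have pp: "pos (\<sigma>\<lparr>pos := p'\<rparr>) = p'" by simp
  have P: "pos \<sigma>' = (\<lambda>j. case map_of A j of Some b'' \<Rightarrow> Some (Bin b'') | None \<Rightarrow> p' j)"
    using dep_migrate(2) unfolding migrate_result_def Let_def pp by simp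
  have Mset: "set M = {j. p' j = Some (Bin b)}" using dep_migrate(9) .
  have "pos \<sigma>' j \<noteq> None \<longleftrightarrow> p' j \<noteq> None" for j
  proof (cases "map_of A j")
    case None then show ?thesis unfolding P by simp
  next
    case (Some x)
    then have "j \<in> set M" using mo[of j] by simp
    then have "p' j \<noteq> None" using Mset by simp
    then show ?thesis using Some unfolding P by simp
  qed
  then have "{j. pos \<sigma>' j \<noteq> None} = {j. p' j \<noteq> None}" by blast
  moreover have "gk \<sigma>' = gk \<sigma>" using dep_migrate(2) unfolding migrate_result_def Let_def by simp
  moreover have "{j. p' j \<noteq> None} = {j. pos \<sigma> j \<noteq> None} - {i}" using dep_migrate(4) by auto
  ultimately show ?thesis using dep_migrate(1) by simp
next
  case (arr_junk k i) show ?thesis using arr_junk(1,2,3) by (simp add: set_eq_iff; auto split: if_splits)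
next
  case (arr_bad k i c b) show ?thesis using arr_bad(1,2,3) by (simp add: set_eq_iff; auto split: if_splits)
next
  case (arr_good k i c b) show ?thesis using arr_good(1,2,3) by (simp add: set_eq_iff; auto split: if_splits)
next
  case (arr_new k i c b) show ?thesis using arr_new(1,2,3) by (simp add: set_eq_iff; auto split: if_splits)
next
  case (dep_plain i l p') show ?thesis using dep_plain(1,2,3,4) by (simp add: set_eq_iff; auto split: if_splits)
qed

definition Dset :: "event list \<Rightarrow> nat \<Rightarrow> nat set" where
  "Dset es p = {j. Arr j \<in> set (take p es) \<and> Dep j \<notin> set (take p es)}"

lemma in_take_nth: "x \<in> set (take p es) \<Longrightarrow> \<exists>q<p. q < length es \<and> es ! q = x"
  by (auto simp: in_set_conv_nth)

lemma ve_srt: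
  assumes "valid_events n arr dur es" "q < r" "r < length es"
  shows "etime arr dur (es!q) < etime arr dur (es!r) \<or>
         (etime arr dur (es!q) = etime arr dur (es!r) \<and> (is_dep (es!q) \<or> \<not> is_dep (es!r)))"
  using assms unfolding valid_events_def sorted_wrt_iff_nth_less by (elim conjE) simp

lemma ve_set: "valid_events n arr dur es \<Longrightarrow> e \<in> set es \<longleftrightarrow> (\<exists>i<n. e = Arr i \<or> e = Dep i)"
  unfolding valid_events_def by (elim conjE) auto

lemma ev_arr:
  assumes ve: "valid_events n arr dur es" and vi: "valid_instance n arr sz dur"
    and p: "p < length es" and e: "es ! p = Arr i"
  shows "i < n" "Arr i \<notin> set (take p es)" "Dep i \<notin> set (take p es)"
proof -
  have "Arr i \<in> set es" using nth_mem[OF p] unfolding e .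
  then obtain i' where "i' < n" "Arr i = Arr i' \<or> Arr i = Dep i'" using ve_set[OF ve, of "Arr i"] by auto
  then show ni: "i < n" by simp
  have d: "0 < dur i" using vi ni unfolding valid_instance_def by simp
  have dist: "distinct es" using ve unfolding valid_events_def by (rule conjunct1)
  show "Arr i \<notin> set (take p es)"
  proof
    assume "Arr i \<in> set (take p es)"
    then obtain q where q: "q < p" "q < length es" "es ! q = Arr i" by (auto dest: in_take_nth)
    then have "es ! q = es ! p" using e by simp
    then have "q = p" using nth_eq_iff_index_eq[OF dist q(2) p] by simp
    then show False using q(1) by simp
  qed
  show "Dep i \<notin> set (take p es)"
  proof
    assume "Dep i \<in> set (take p es)"
    then obtain q where q: "q < p" "es ! q = Dep i" by (auto dest: in_take_nth)
    have "arr i + dur i < arr i \<or> (arr i + dur i = arr i \<and> (True \<or> \<not> False))"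
      using ve_srt[OF ve q(1) p] unfolding q(2) e by simp
    then show False using d by linarith
  qed
qed

lemma D_present:
  assumes ve: "valid_events n arr dur es"
    and p: "p < length es" and e: "es ! p = Arr i"
  shows "Dset es p \<subseteq> present n arr dur (arr i)"
proof
  fix j assume "j \<in> Dset es p"
  then have a: "Arr j \<in> set (take p es)" and d: "Dep j \<notin> set (take p es)" unfolding Dset_def by auto
  obtain q where q: "q < p" "q < length es" "es ! q = Arr j" using a by (auto dest: in_take_nth)
  have "Arr j \<in> set es" using nth_mem[OF q(2)] unfolding q(3) .
  then obtain j' where "j' < n" "Arr j = Arr j' \<or> Arr j = Dep j'" using ve_set[OF ve, of "Arr j"] by auto
  then have jn: "j < n" by simp
  have "arr j \<le> arr i" using ve_srt[OF ve q(1) p] unfolding q(3) e by auto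
  moreover have "arr i < arr j + dur j"
  proof -
    have "Dep j \<in> set es" using ve_set[OF ve, of "Dep j"] jn by auto
    then obtain r where r: "r < length es" "es ! r = Dep j" by (auto simp: in_set_conv_nth)
    have "\<not> r < p"
    proof
      assume "r < p"
      then have "Dep j \<in> set (take p es)" using r by (auto simp: in_set_conv_nth)
      then show False using d by simp
    qed
    moreover have "r \<noteq> p" using r e by auto
    ultimately have pr: "p < r" by simp
    show ?thesis using ve_srt[OF ve pr r(1)] unfolding r(2) e by auto
  qed
  ultimately show "j \<in> present n arr dur (arr i)" unfolding present_def using jn by auto
qed

lemma card_present_rho: "card (present n arr dur t) \<le> rho n arr dur"
proof -
  have "(\<lambda>t. card (present n arr dur t)) ` UNIV \<subseteq> {..n}"
  proof
    fix x assume "x \<in> (\<lambda>t. card (present n arr dur t)) ` UNIV"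
    then obtain t' where x: "x = card (present n arr dur t')" by blast
    have "present n arr dur t' \<subseteq> {..<n}" unfolding present_def by auto
    then have "card (present n arr dur t') \<le> card {..<n}" by (rule card_mono[rotated]) simp
    then show "x \<in> {..n}" using x by simp
  qed
  then have "finite ((\<lambda>t. card (present n arr dur t)) ` UNIV)" using finite_subset by blast
  then show ?thesis unfolding rho_def by (rule Max_ge) simp
qed

lemma Dset_Suc:
  assumes p: "p < length es"
  shows "es ! p = Arr i \<Longrightarrow> Dep i \<notin> set (take p es) \<Longrightarrow> Dset es (Suc p) = insert i (Dset es p)"
    and "es ! p = Dep i \<Longrightarrow> Dset es (Suc p) = Dset es p - {i}"
proof -
  have t: "take (Suc p) es = take p es @ [es ! p]" using take_Suc_conv_app_nth[OF p] .
  show "es ! p = Arr i \<Longrightarrow> Dep i \<notin> set (take p es) \<Longrightarrow> Dset es (Suc p) = insert i (Dset es p)"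
    unfolding Dset_def t by auto
  show "es ! p = Dep i \<Longrightarrow> Dset es (Suc p) = Dset es p - {i}"
    unfolding Dset_def t by auto
qed

lemma run_inv:
  assumes vi: "valid_instance n arr sz dur" and ve: "valid_events n arr dur es"
    and run: "is_run \<alpha> sz es ss" and a: "0 < \<alpha>" "\<alpha> < 1/2"
  shows "p \<le> length es \<Longrightarrow> ainv \<alpha> sz n (ss!p) \<and> {j. pos (ss!p) j \<noteq> None} = Dset es p \<and>
           (gk (ss!p) = 0 \<or> 2^(gk (ss!p) - 1) \<le> rho n arr dur)"
proof (induction p)
  case 0
  have s0: "ss ! 0 = init_state" using run unfolding is_run_def by blast
  have "ainv \<alpha> sz n init_state"
    unfolding ainv_def invc_def init_state_def is_open_def by simp
  moreover have "Dset es 0 = {}" unfolding Dset_def by simp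
  ultimately show ?case using s0 by (simp add: init_state_def)
next
  case (Suc p)
  then have p: "p < length es" by simp
  have IH: "ainv \<alpha> sz n (ss!p)" "{j. pos (ss!p) j \<noteq> None} = Dset es p"
    "gk (ss!p) = 0 \<or> 2^(gk (ss!p) - 1) \<le> rho n arr dur" using Suc by auto
  have st: "step \<alpha> sz (ss!p) (es!p) (ss!Suc p)" using run p unfolding is_run_def by blast
  have szb: "\<forall>j<n. 0 \<le> sz j \<and> sz j \<le> 1" using vi unfolding valid_instance_def by simp
  have sd: "(\<forall>i. es!p = Arr i \<longrightarrow> {j. pos (ss!Suc p) j \<noteq> None} = insert i {j. pos (ss!p) j \<noteq> None} \<and>
              gk (ss!Suc p) = new_guess (ss!p)) \<and>
         (\<forall>i. es!p = Dep i \<longrightarrow> {j. pos (ss!Suc p) j \<noteq> None} = {j. pos (ss!p) j \<noteq> None} - {i} \<and>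
              gk (ss!Suc p) = gk (ss!p))" by (rule step_dom[OF st])
  show ?case
  proof (cases "es ! p")
    case (Arr i)
    have ev: "i < n" "Arr i \<notin> set (take p es)" "Dep i \<notin> set (take p es)"
      using ev_arr[OF ve vi p Arr] by auto
    have pn: "pos (ss!p) i = None" using IH(2) ev(2) unfolding Dset_def by blast
    have inv: "ainv \<alpha> sz n (ss!Suc p)"
      by (rule step_inv[OF st IH(1) a szb]) (use Arr ev(1) pn in simp)
    have dom: "{j. pos (ss!Suc p) j \<noteq> None} = Dset es (Suc p)"
      using sd Arr IH(2) Dset_Suc(1)[OF p Arr ev(3)] by simp
    have ni: "real (num_items (ss!p)) \<le> rho n arr dur"
    proof -
      have "num_items (ss!p) = card (Dset es p)" unfolding num_items_def IH(2) ..
      also have "\<dots> \<le> card (present n arr dur (arr i))"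
        by (rule card_mono[OF _ D_present[OF ve p Arr]]) (auto simp: present_def)
      also have "\<dots> \<le> rho n arr dur" by (rule card_present_rho)
      finally show ?thesis by simp
    qed
    have g: "gk (ss!Suc p) = new_guess (ss!p)" using sd Arr by simp
    have "gk (ss!Suc p) = 0 \<or> 2^(gk (ss!Suc p) - 1) \<le> rho n arr dur"
    proof (cases "2 ^ gk (ss!p) \<le> num_items (ss!p)")
      case True
      then have "gk (ss!Suc p) = Suc (gk (ss!p))" using g unfolding new_guess_def by simp
      then show ?thesis using True ni by simp
    next
      case False
      then have "gk (ss!Suc p) = gk (ss!p)" using g unfolding new_guess_def by simp
      then show ?thesis using IH(3) by simp
    qed
    then show ?thesis using inv dom by blast
  next
    case (Dep i)
    have inv: "ainv \<alpha> sz n (ss!Suc p)"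
      by (rule step_inv[OF st IH(1) a szb]) (use Dep in simp)
    have dom: "{j. pos (ss!Suc p) j \<noteq> None} = Dset es (Suc p)"
      using sd Dep IH(2) Dset_Suc(2)[OF p Dep] by simp
    have "gk (ss!Suc p) = gk (ss!p)" using sd Dep by simp
    then show ?thesis using inv dom IH(3) by simp
  qed
qed

lemma take_filter_sorted:
  fixes f :: "'a \<Rightarrow> real"
  shows "sorted_wrt (\<lambda>a b. f a \<le> f b) xs \<Longrightarrow>
    take (length (filter (\<lambda>e. f e \<le> t) xs)) xs = filter (\<lambda>e. f e \<le> t) xs"
proof (induction xs)
  case Nil then show ?case by simp
next
  case (Cons x xs)
  show ?case
  proof (cases "f x \<le> t")
    case True then show ?thesis using Cons by simp
  next
    case False
    then have "filter (\<lambda>e. f e \<le> t) xs = []" using Cons.prems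
      by (auto simp: filter_empty_conv)
    then show ?thesis using False by simp
  qed
qed

lemma final_present:
  assumes ve: "valid_events n arr dur es"
  shows "Dset es (length (filter (\<lambda>e. etime arr dur e \<le> t) es)) \<subseteq> present n arr dur t"
proof -
  have srt: "sorted_wrt (\<lambda>a b. etime arr dur a \<le> etime arr dur b) es"
  proof -
    have "sorted_wrt (\<lambda>e1 e2. etime arr dur e1 < etime arr dur e2 \<or>
                          (etime arr dur e1 = etime arr dur e2 \<and> (is_dep e1 \<or> \<not> is_dep e2))) es"
      using ve unfolding valid_events_def by (elim conjE)
    then show ?thesis by (rule sorted_wrt_mono_rel[rotated]) auto
  qed
  have tk: "take (length (filter (\<lambda>e. etime arr dur e \<le> t) es)) es = filter (\<lambda>e. etime arr dur e \<le> t) es"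
    by (rule take_filter_sorted[OF srt])
  show ?thesis
  proof
    fix j assume "j \<in> Dset es (length (filter (\<lambda>e. etime arr dur e \<le> t) es))"
    then have a: "Arr j \<in> set es" "arr j \<le> t" and d: "Dep j \<notin> set (filter (\<lambda>e. etime arr dur e \<le> t) es)"
      unfolding Dset_def tk by auto
    obtain j' where "j' < n" "Arr j = Arr j' \<or> Arr j = Dep j'" using ve_set[OF ve, of "Arr j"] a by auto
    then have jn: "j < n" by simp
    have "Dep j \<in> set es" using ve_set[OF ve, of "Dep j"] jn by auto
    then have "\<not> arr j + dur j \<le> t" using d by auto
    then show "j \<in> present n arr dur t" unfolding present_def using jn a by auto
  qed
qed

theorem lemma11:
  "\<exists>C::real. \<forall>(\<alpha>::real) n arr sz dur es ss (t::real).
     0 < \<alpha> \<and> \<alpha> < 1/2 \<and> valid_instance n arr sz dur \<and> valid_events n arr dur es \<and>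
     is_run \<alpha> sz es ss \<longrightarrow>
     real (num_open (state_at arr dur es ss t))
       \<le> real (OPT sz (present n arr dur t)) / \<alpha> + C * log 2 (real (rho n arr dur))"
proof (intro exI[of _ 5] allI impI, elim conjE)
  fix \<alpha> :: real and n arr sz dur es ss and t :: real
  assume a: "0 < \<alpha>" "\<alpha> < 1/2" and vi: "valid_instance n arr sz dur"
    and ve: "valid_events n arr dur es" and run: "is_run \<alpha> sz es ss"
  define P where "P = length (filter (\<lambda>e. etime arr dur e \<le> t) es)"
  define \<sigma> where "\<sigma> = ss ! P"
  define S where "S = present n arr dur t"
  define R where "R = rho n arr dur"
  define g where "g = gk \<sigma>"
  have st: "state_at arr dur es ss t = \<sigma>" unfolding state_at_def \<sigma>_def P_def ..
  have PL: "P \<le> length es" unfolding P_def by simp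
  have RI: "ainv \<alpha> sz n \<sigma>" "{j. pos \<sigma> j \<noteq> None} = Dset es P" "g = 0 \<or> 2^(g - 1) \<le> R"
    using run_inv[OF vi ve run a PL] unfolding \<sigma>_def g_def R_def by auto
  have dS: "{j. pos \<sigma> j \<noteq> None} \<subseteq> S" using RI(2) final_present[OF ve] unfolding S_def P_def by simp
  have Sn: "S \<subseteq> {..<n}" unfolding S_def present_def by auto
  have szb: "\<forall>j<n. 0 \<le> sz j \<and> sz j \<le> 1" using vi unfolding valid_instance_def by simp
  have finS: "finite S" using Sn finite_subset by blast
  have fd: "finite {j. pos \<sigma> j \<noteq> None}" using finite_subset[OF dS finS] .
  have c1: "real (card (ran (pos \<sigma>))) \<le> (\<Sum>j\<in>S. sz j) / \<alpha> + 2 * real g + 1"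
    using count_bins[of \<alpha> sz n "pos \<sigma>" "cls \<sigma>" "good \<sigma>" "gk \<sigma>" S] RI(1) a(1) dS Sn szb
    unfolding ainv_def g_def by blast
  have so: "(\<Sum>j\<in>S. sz j) / \<alpha> \<le> real (OPT sz S) / \<alpha>"
    using sum_le_OPT[OF Sn szb] a(1) by (simp add: divide_right_mono)
  have c2: "card (ran (pos \<sigma>)) \<le> R"
  proof -
    have "card (ran (pos \<sigma>)) \<le> card {j. pos \<sigma> j \<noteq> None}" by (rule ran_card_dom[OF fd])
    also have "\<dots> \<le> card S" by (rule card_mono[OF finS dS])
    also have "\<dots> \<le> R" unfolding S_def R_def by (rule card_present_rho)
    finally show ?thesis .
  qed
  have OPT0: "0 \<le> real (OPT sz S) / \<alpha>" using a by simp
  show "real (num_open (state_at arr dur es ss t)) \<le> real (OPT sz (present n arr dur t)) / \<alpha> + 5 * log 2 (real (rho n arr dur))"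
    unfolding st num_open_def S_def[symmetric] R_def[symmetric]
  proof (cases "R \<le> 1")
    case True
    then have "R = 0 \<or> R = 1" by auto
    then have l0: "log 2 (real R) = 0" by (auto simp: log_def)
    show "real (card (ran (pos \<sigma>))) \<le> real (OPT sz S) / \<alpha> + 5 * log 2 (real R)"
    proof (cases "card (ran (pos \<sigma>)) = 0")
      case True then show ?thesis using l0 OPT0 by simp
    next
      case False
      then have c: "card (ran (pos \<sigma>)) = 1" using c2 \<open>R \<le> 1\<close> by simp
      then have "ran (pos \<sigma>) \<noteq> {}" by auto
      then obtain j l where "pos \<sigma> j = Some l" unfolding ran_def by blast
      then have "S \<noteq> {}" using dS by blast
      then have "1 \<le> OPT sz S" using OPT_pos[OF Sn szb] by blast
      then have "1 \<le> real (OPT sz S)" by simp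
      moreover have "real (OPT sz S) \<le> real (OPT sz S) / \<alpha>"
      proof -
        have "real (OPT sz S) * \<alpha> \<le> real (OPT sz S) * 1"
          by (rule mult_left_mono) (use a in auto)
        then show ?thesis using a by (simp add: le_divide_eq)
      qed
      ultimately show ?thesis using c l0 by simp
    qed
  next
    case False
    then have R2: "2 ^ 1 \<le> R" by simp
    have L1: "1 \<le> log 2 (real R)" using le_log2_of_power[OF R2] by simp
    have gL: "real g \<le> 1 + log 2 (real R)"
    proof (cases "g = 0")
      case True then show ?thesis using L1 by simp
    next
      case False
      then have "2 ^ (g - 1) \<le> R" using RI(3) by simp
      then have "real (g - 1) \<le> log 2 (real R)" by (rule le_log2_of_power)
      then show ?thesis using False by (simp add: of_nat_diff)
    qed
    show "real (card (ran (pos \<sigma>))) \<le> real (OPT sz S) / \<alpha> + 5 * log 2 (real R)"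
      using c1 so gL L1 by linarith
  qed
qed

end
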